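(* Let $H_{ij}$, $i=1,\ldots,b$, $j=1,\ldots,s_i$, be $n=\sum_i s_i$ null hypotheses with $p$-values $P_{ij}$, where true-null $p$-values are $U(0,1)$, the rows $(P_{i1},\ldots,P_{is_i})$ are mutually independent across $i$, and within each row $i$, for every true-null $P_{ij}$ and every coordinatewise non-decreasing $\phi_i$, $E\{\phi_i(P_{i1},\ldots,P_{is_i})\mid P_{ij}\le u\}$ is non-decreasing in $u\in(0,1)$. Fix $\alpha\in(0,1)$ and $\lambda$ with $(2b+3)^{-2/(b+2)}\le\lambda<1$, and let $\widehat n_0=(n-R(\lambda)+s_{\max})/(1-\lambda)$, where $s_{\max}=\max_is_i$ and $R(\lambda)=\#\{(i,j):P_{ij}\le\lambda\}$. Apply the adaptive BH method: $\widehat\pi_0=\widehat n_0/n$, $Q_{ij}=\widehat\pi_0P_{ij}$; $\tilde P_i=(n/b)\min_jP_{ij}$ ordered as $\tilde P_{(1)}\le\cdots\le\tilde P_{(b)}$, $\tilde Q_i=\widehat\pi_0\tilde P_i$, $\tilde Q_{(i)}=\widehat\pi_0\tilde P_{(i)}$; $B^*=\max\{1\le i\le b:\tilde Q_{(i)}\le i\alpha/b\}$; if it exists, reject $H_{ij}$ for all $(i,j)$ with $\tilde Q_i\le\tilde Q_{(B^* )}$ and $Q_{ij}\le B^*\alpha/n$, otherwise reject nothing. Then for every configuration of true and false nulls, the false discovery rate of this method is at most $\alpha$.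
   Context: FDR $=E(V/\max\{R,1\})$, where $V$ is the number of rejected true null hypotheses and $R$ the total number of rejections. *)

theory Defs
  imports "HOL-Probability.Probability"
begin

text \<open>Hypotheses are indexed by pairs (i,j) with i < b, j < s i (0-based).
  A realisation of the p-values is a function p :: nat => nat => real.\<close>

definition idx :: "nat \<Rightarrow> (nat \<Rightarrow> nat) \<Rightarrow> (nat \<times> nat) set" where
  "idx b s = {(i,j). i < b \<and> j < s i}"

definition ntot :: "nat \<Rightarrow> (nat \<Rightarrow> nat) \<Rightarrow> nat" where
  "ntot b s = (\<Sum>i<b. s i)"

definition smax :: "nat \<Rightarrow> (nat \<Rightarrow> nat) \<Rightarrow> nat" where
  "smax b s = Max (s ` {..<b})"

definition Rlam :: "nat \<Rightarrow> (nat \<Rightarrow> nat) \<Rightarrow> real \<Rightarrow> (nat \<Rightarrow> nat \<Rightarrow> real) \<Rightarrow> nat" where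
  "Rlam b s lam p = card {(i,j) \<in> idx b s. p i j \<le> lam}"

definition n0hat :: "nat \<Rightarrow> (nat \<Rightarrow> nat) \<Rightarrow> real \<Rightarrow> (nat \<Rightarrow> nat \<Rightarrow> real) \<Rightarrow> real" where
  "n0hat b s lam p =
     (real (ntot b s) - real (Rlam b s lam p) + real (smax b s)) / (1 - lam)"

definition pi0hat :: "nat \<Rightarrow> (nat \<Rightarrow> nat) \<Rightarrow> real \<Rightarrow> (nat \<Rightarrow> nat \<Rightarrow> real) \<Rightarrow> real" where
  "pi0hat b s lam p = n0hat b s lam p / real (ntot b s)"

definition Qv :: "nat \<Rightarrow> (nat \<Rightarrow> nat) \<Rightarrow> real \<Rightarrow> (nat \<Rightarrow> nat \<Rightarrow> real) \<Rightarrow> nat \<Rightarrow> nat \<Rightarrow> real" where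
  "Qv b s lam p i j = pi0hat b s lam p * p i j"

definition Ptil :: "nat \<Rightarrow> (nat \<Rightarrow> nat) \<Rightarrow> (nat \<Rightarrow> nat \<Rightarrow> real) \<Rightarrow> nat \<Rightarrow> real" where
  "Ptil b s p i = (real (ntot b s) / real b) * Min {p i j | j. j < s i}"

definition Ptil_ord :: "nat \<Rightarrow> (nat \<Rightarrow> nat) \<Rightarrow> (nat \<Rightarrow> nat \<Rightarrow> real) \<Rightarrow> nat \<Rightarrow> real" where
  "Ptil_ord b s p k = sort (map (Ptil b s p) [0..<b]) ! (k - 1)"

definition Qtil :: "nat \<Rightarrow> (nat \<Rightarrow> nat) \<Rightarrow> real \<Rightarrow> (nat \<Rightarrow> nat \<Rightarrow> real) \<Rightarrow> nat \<Rightarrow> real" where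
  "Qtil b s lam p i = pi0hat b s lam p * Ptil b s p i"

definition Qtil_ord :: "nat \<Rightarrow> (nat \<Rightarrow> nat) \<Rightarrow> real \<Rightarrow> (nat \<Rightarrow> nat \<Rightarrow> real) \<Rightarrow> nat \<Rightarrow> real" where
  "Qtil_ord b s lam p k = pi0hat b s lam p * Ptil_ord b s p k"

definition Bset :: "nat \<Rightarrow> (nat \<Rightarrow> nat) \<Rightarrow> real \<Rightarrow> real \<Rightarrow> (nat \<Rightarrow> nat \<Rightarrow> real) \<Rightarrow> nat set" where
  "Bset b s alpha lam p = {k \<in> {1..b}. Qtil_ord b s lam p k \<le> real k * alpha / real b}"

definition rejections :: "nat \<Rightarrow> (nat \<Rightarrow> nat) \<Rightarrow> real \<Rightarrow> real \<Rightarrow> (nat \<Rightarrow> nat \<Rightarrow> real) \<Rightarrow> (nat \<times> nat) set" where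
  "rejections b s alpha lam p =
     (if Bset b s alpha lam p = {} then {}
      else (let B = Max (Bset b s alpha lam p) in
        {(i,j) \<in> idx b s. Qtil b s lam p i \<le> Qtil_ord b s lam p B
                         \<and> Qv b s lam p i j \<le> real B * alpha / real (ntot b s)}))"

text \<open>False discovery proportion V / max(R,1), N0 = set of true nulls.\<close>
definition fdp :: "(nat \<times> nat) set \<Rightarrow> (nat \<times> nat) set \<Rightarrow> real" where
  "fdp N0 Rej = real (card (Rej \<inter> N0)) / real (max (card Rej) 1)"

definition row :: "(nat \<Rightarrow> nat) \<Rightarrow> ('w \<Rightarrow> nat \<Rightarrow> nat \<Rightarrow> real) \<Rightarrow> nat \<Rightarrow> 'w \<Rightarrow> (nat \<Rightarrow> real)" where
  "row s P i \<omega> = restrict (\<lambda>j. P \<omega> i j) {..<s i}"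

end

theory Submission
  imports Defs
begin


definition Bn where "Bn b s alpha lam p = (if Bset b s alpha lam p = {} then 0 else Max (Bset b s alpha lam p))"
definition Dm :: "nat \<Rightarrow> (nat \<Rightarrow> nat) \<Rightarrow> real \<Rightarrow> (nat \<Rightarrow> nat \<Rightarrow> real) \<Rightarrow> nat \<Rightarrow> nat" where "Dm b s lam p i = card {(k,j) \<in> idx b s. k \<noteq> i \<and> lam < p k j}"
definition Dt :: "nat \<Rightarrow> (nat \<Rightarrow> nat) \<Rightarrow> real \<Rightarrow> (nat \<Rightarrow> nat \<Rightarrow> real) \<Rightarrow> nat" where "Dt b s lam p = card {(k,j) \<in> idx b s. lam < p k j}"
definition cc where "cc b s alpha lam p i = alpha*(1-lam)/(real (Dm b s lam p i) + real (smax b s))"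
definition Tf where "Tf b s alpha lam p i j = (\<Sum>k\<in>{1..b}. if Bn b s alpha lam p = k \<and> p i j \<le> cc b s alpha lam p i * real k then 1/real k else 0)"
definition Wf :: "nat \<Rightarrow> (nat \<Rightarrow> nat) \<Rightarrow> real \<Rightarrow> (nat \<Rightarrow> nat \<Rightarrow> real) \<Rightarrow> nat \<Rightarrow> nat \<Rightarrow> real" where "Wf b s lam p i j = (if lam < p i j then 1 else 0)/(real (Dm b s lam p i) + real (smax b s))"

lemma aux1: fixes D x Y n l :: real assumes "0<n" "0<l" "D/(l*n)*x \<le> Y/n" shows "D*x \<le> Y*l"
proof -
  have "D/(l*n)*x*(l*n) \<le> Y/n*(l*n)" using assms by (intro mult_right_mono) auto
  then show ?thesis using assms by (simp add: field_simps)
qed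
lemma aux2: fixes D x Y :: real assumes "0<D" "D*x \<le> Y" shows "x \<le> Y/D"
  using assms by (simp add: pos_le_divide_eq mult.commute)
lemma aux3: fixes pi n b x Y :: real assumes "0<n" "0<b" "pi*(n/b*x) \<le> Y/b" shows "pi*x \<le> Y/n"
proof -
  have "pi*(n/b*x)*(b/n) \<le> Y/b*(b/n)" using assms by (intro mult_right_mono) auto
  then show ?thesis using assms by (simp add: field_simps)
qed

lemma idx_Sigma: "idx b s = Sigma {..<b} (\<lambda>i. {..<s i})"
  by (auto simp: idx_def)

lemma finite_idx[simp]: "finite (idx b s)"
  by (simp add: idx_Sigma)

lemma finite_idx_filter[simp]: "finite {(k, j). (k, j) \<in> idx b s \<and> P k j}"
  by (rule finite_subset[of _ "idx b s"]) auto

lemma card_idx: "card (idx b s) = ntot b s"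
  by (simp add: idx_Sigma ntot_def card_SigmaI)

lemma sorted_count:
  fixes f :: "nat \<Rightarrow> real"
  assumes "1 \<le> k" "k \<le> b"
  shows "sort (map f [0..<b]) ! (k-1) \<le> v \<longleftrightarrow> k \<le> card {i. i<b \<and> f i \<le> v}"
proof -
  let ?L = "sort (map f [0..<b])"
  have len: "length ?L = b" by simp
  have "{i. i<b \<and> map f [0..<b]!i \<le> v} = {i. i<b \<and> f i \<le> v}" by auto
  then have "card {i. i<b \<and> f i \<le> v} = length (filter (\<lambda>x. x \<le> v) (map f [0..<b]))"
    by (simp add: length_filter_conv_card)
  also have "\<dots> = length (filter (\<lambda>x. x \<le> v) ?L)"
    by (metis mset_filter mset_sort size_mset)
  also have "\<dots> = card {m. m < b \<and> ?L!m \<le> v}"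
    by (simp add: length_filter_conv_card)
  finally have eq: "card {i. i<b \<and> f i \<le> v} = card {m. m < b \<and> ?L!m \<le> v}" .
  have srt: "sorted ?L" by simp
  show ?thesis
  proof
    assume h: "?L ! (k-1) \<le> v"
    have "{..<k} \<subseteq> {m. m < b \<and> ?L!m \<le> v}"
    proof
      fix m assume "m \<in> {..<k}"
      then have "m \<le> k-1" "k - 1 < length ?L" using assms by auto
      then have "?L!m \<le> ?L!(k-1)" using srt by (simp add: sorted_nth_mono)
      then show "m \<in> {m. m < b \<and> ?L!m \<le> v}" using h \<open>m \<in> {..<k}\<close> assms by auto
    qed
    then have "card {..<k} \<le> card {m. m < b \<and> ?L!m \<le> v}" by (intro card_mono) auto
    then show "k \<le> card {i. i<b \<and> f i \<le> v}" using eq by simp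
  next
    assume h: "k \<le> card {i. i<b \<and> f i \<le> v}"
    show "?L ! (k-1) \<le> v"
    proof (rule ccontr)
      assume "\<not> ?L ! (k-1) \<le> v"
      then have gt: "?L ! (k-1) > v" by simp
      have "{m. m < b \<and> ?L!m \<le> v} \<subseteq> {..<k-1}"
      proof
        fix m assume m: "m \<in> {m. m < b \<and> ?L!m \<le> v}"
        show "m \<in> {..<k-1}"
        proof (rule ccontr)
          assume "m \<notin> {..<k-1}"
          then have "k-1 \<le> m" "m < length ?L" using m by auto
          then have "?L!(k-1) \<le> ?L!m" using srt by (simp add: sorted_nth_mono)
          then show False using m gt by auto
        qed
      qed
      then have "card {m. m < b \<and> ?L!m \<le> v} \<le> k - 1"
        by (metis card_lessThan card_mono finite_lessThan)
      then show False using h eq assms by simp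
    qed
  qed
qed

context
  fixes b :: nat and s :: "nat \<Rightarrow> nat"
  assumes b_pos: "1 \<le> b" and s_pos: "\<forall>i<b. 1 \<le> s i"
begin

lemma ntot_pos: "1 \<le> ntot b s"
proof -
  have "s 0 \<le> ntot b s" unfolding ntot_def using b_pos
    by (intro member_le_sum) auto
  then show ?thesis using s_pos b_pos by fastforce
qed

lemma s_le_smax: "i < b \<Longrightarrow> s i \<le> smax b s"
  unfolding smax_def by (intro Max_ge) auto

lemma smax_pos: "1 \<le> smax b s"
  using s_le_smax[of 0] s_pos b_pos by fastforce

lemma Rlam_Dt: "Rlam b s lam p + Dt b s lam p = ntot b s"
proof -
  have "Rlam b s lam p + Dt b s lam p = card ({(i,j) \<in> idx b s. p i j \<le> lam} \<union> {(k,j) \<in> idx b s. lam < p k j})"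
    unfolding Rlam_def Dt_def
    by (subst card_Un_disjoint) auto
  also have "({(i,j) \<in> idx b s. p i j \<le> lam} \<union> {(k,j) \<in> idx b s. lam < p k j}) = idx b s"
    by auto
  finally show ?thesis by (simp add: card_idx)
qed

lemma pi0hat_eq: "lam < 1 \<Longrightarrow> pi0hat b s lam p = (real (Dt b s lam p) + real (smax b s)) / ((1-lam) * real (ntot b s))"
proof -
  assume "lam < 1"
  have "real (ntot b s) - real (Rlam b s lam p) = real (Dt b s lam p)"
    using Rlam_Dt[of lam p] by linarith
  then show ?thesis unfolding pi0hat_def n0hat_def by (simp add: field_simps)
qed

lemma pi0hat_pos: "lam < 1 \<Longrightarrow> 0 < pi0hat b s lam p"
  using pi0hat_eq smax_pos ntot_pos by (auto intro!: divide_pos_pos)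

lemma Dm_le_Dt: "Dm b s lam p i \<le> Dt b s lam p"
  unfolding Dm_def Dt_def by (intro card_mono) auto

lemma Dt_le_Dm: "i < b \<Longrightarrow> Dt b s lam p \<le> Dm b s lam p i + smax b s"
proof -
  assume i: "i < b"
  have "{(k,j) \<in> idx b s. lam < p k j} \<subseteq> {(k,j) \<in> idx b s. k \<noteq> i \<and> lam < p k j} \<union> ({i} \<times> {..<s i})"
    by (auto simp: idx_def)
  then have "Dt b s lam p \<le> card ({(k,j) \<in> idx b s. k \<noteq> i \<and> lam < p k j} \<union> ({i} \<times> {..<s i}))"
    unfolding Dt_def by (intro card_mono) auto
  also have "\<dots> \<le> Dm b s lam p i + s i"
    unfolding Dm_def by (rule order_trans[OF card_Un_le]) (simp add: card_cartesian_product)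
  finally show ?thesis using s_le_smax[OF i] by simp
qed

lemma Bset_char:
  assumes "lam < 1"
  shows "m \<in> Bset b s alpha lam p \<longleftrightarrow> 1 \<le> m \<and> m \<le> b \<and>
     m \<le> card {i. i < b \<and> Ptil b s p i \<le> real m * alpha / real b / pi0hat b s lam p}"
proof -
  have pos: "0 < pi0hat b s lam p" using pi0hat_pos assms .
  let ?c = "real m * alpha / real b"
  have 1: "m \<in> Bset b s alpha lam p \<longleftrightarrow> 1\<le>m \<and> m\<le>b \<and> pi0hat b s lam p * Ptil_ord b s p m \<le> ?c"
    by (simp add: Bset_def Qtil_ord_def)
  have 2: "pi0hat b s lam p * X \<le> ?c \<longleftrightarrow> X \<le> ?c / pi0hat b s lam p" for X
    using pos by (simp only: pos_le_divide_eq[OF pos] mult.commute)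
  show ?thesis
    unfolding 1 2 Ptil_ord_def using sorted_count[of m b "Ptil b s p"] by blast

qed


lemma Ptil_set: "{p i j | j. j < s i} = (\<lambda>j. p i j) ` {..<s i}"
  by auto

lemma Min_attained: "i < b \<Longrightarrow> \<exists>j<s i. p i j = Min {p i j | j. j < s i}"
proof -
  assume i: "i < b"
  have "0 \<in> {..<s i}" using s_pos i by (auto simp: Suc_le_eq)
  then have "{..<s i} \<noteq> {}" by auto
  then have "Min ((\<lambda>j. p i j) ` {..<s i}) \<in> (\<lambda>j. p i j) ` {..<s i}"
    by (intro Min_in) auto
  then show ?thesis unfolding Ptil_set by auto
qed

lemma Ptil_mono:
  assumes i: "i < b" and le: "\<forall>j<s i. p i j \<le> p' i j"
  shows "Ptil b s p i \<le> Ptil b s p' i"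
proof -
  obtain j0 where j0: "j0 < s i" "p' i j0 = Min {p' i j | j. j < s i}"
    using Min_attained[OF i, of p'] by blast
  have "Min {p i j | j. j < s i} \<le> p i j0"
    unfolding Ptil_set using j0 by (intro Min_le) auto
  also have "\<dots> \<le> p' i j0" using le j0 by auto
  finally have "Min {p i j | j. j < s i} \<le> Min {p' i j | j. j < s i}" using j0 by simp
  then show ?thesis unfolding Ptil_def by (intro mult_left_mono) auto
qed

lemma Bset_sub: "Bset b s alpha lam p \<subseteq> {1..b}"
  unfolding Bset_def by auto

lemma Bset_range: "m \<in> Bset b s alpha lam p \<Longrightarrow> 1 \<le> m \<and> m \<le> b"
  by (simp add: Bset_def)

lemma finite_Bset[simp]: "finite (Bset b s alpha lam p)"
  by (rule finite_subset[OF Bset_sub]) simp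

lemma Bset_mono:
  assumes lam: "lam < 1" and alpha: "0 \<le> alpha"
    and le: "\<forall>(k,j)\<in>idx b s. p k j \<le> p' k j"
  shows "Bset b s alpha lam p' \<subseteq> Bset b s alpha lam p"
proof
  fix m assume m: "m \<in> Bset b s alpha lam p'"
  have "Rlam b s lam p' \<le> Rlam b s lam p"
    unfolding Rlam_def using le by (intro card_mono) auto
  then have "Dt b s lam p \<le> Dt b s lam p'"
    using Rlam_Dt[of lam p] Rlam_Dt[of lam p'] by linarith
  then have pi: "pi0hat b s lam p \<le> pi0hat b s lam p'"
    unfolding pi0hat_eq[OF lam] using lam ntot_pos
    by (intro divide_right_mono) auto
  have pos: "0 < pi0hat b s lam p" using pi0hat_pos[OF lam] .
  let ?c = "real m * alpha / real b"
  have c: "0 \<le> ?c" using alpha by auto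
  have v: "?c / pi0hat b s lam p' \<le> ?c / pi0hat b s lam p"
    using c pi pos by (intro divide_left_mono) auto
  have "{i. i < b \<and> Ptil b s p' i \<le> ?c / pi0hat b s lam p'} \<subseteq> {i. i < b \<and> Ptil b s p i \<le> ?c / pi0hat b s lam p}"
  proof safe
    fix i assume i: "i < b" and h: "Ptil b s p' i \<le> ?c / pi0hat b s lam p'"
    have "Ptil b s p i \<le> Ptil b s p' i" using le i by (intro Ptil_mono) (auto simp: idx_def)
    then show "Ptil b s p i \<le> ?c / pi0hat b s lam p" using h v by linarith
  qed
  then have "card {i. i < b \<and> Ptil b s p' i \<le> ?c / pi0hat b s lam p'} \<le> card {i. i < b \<and> Ptil b s p i \<le> ?c / pi0hat b s lam p}"
    by (intro card_mono) auto
  then show "m \<in> Bset b s alpha lam p"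
    using m unfolding Bset_char[OF lam] by auto
qed

lemma Bn_le: "Bn b s alpha lam p \<le> b"
proof (cases "Bset b s alpha lam p = {}")
  case True then show ?thesis by (simp add: Bn_def)
next
  case False
  have "Max (Bset b s alpha lam p) \<in> Bset b s alpha lam p" using False by (intro Max_in) auto
  then have "Max (Bset b s alpha lam p) \<in> {1..b}" using Bset_sub by blast
  then show ?thesis using False by (simp add: Bn_def)
qed

lemma Bn_in: "Bn b s alpha lam p \<noteq> 0 \<Longrightarrow> Bn b s alpha lam p \<in> Bset b s alpha lam p"
  unfolding Bn_def by (auto split: if_splits intro!: Max_in)

lemma Bn_mono:
  assumes lam: "lam < 1" and alpha: "0 \<le> alpha"
    and le: "\<forall>(k,j)\<in>idx b s. p k j \<le> p' k j"
  shows "Bn b s alpha lam p' \<le> Bn b s alpha lam p"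
  using Bset_mono[OF assms] unfolding Bn_def
  by (auto intro!: Max_mono)

lemma Bn_local:
  assumes lam: "lam < 1" and alpha: "0 \<le> alpha"
    and eq: "\<forall>(k,j)\<in>idx b s. p k j = p' k j"
  shows "Bn b s alpha lam p' = Bn b s alpha lam p"
proof -
  have 1: "\<forall>(k,j)\<in>idx b s. p k j \<le> p' k j" using eq by auto
  have 2: "\<forall>(k,j)\<in>idx b s. p' k j \<le> p k j" using eq by auto
  show ?thesis using Bn_mono[OF lam alpha 1] Bn_mono[OF lam alpha 2] by (rule antisym)
qed

lemma Dm_local:
  assumes eq: "\<forall>(k,j)\<in>idx b s. p k j = p' k j"
  shows "Dm b s lam p' i = Dm b s lam p i"
proof -
  have "{(k,j) \<in> idx b s. k \<noteq> i \<and> lam < p' k j} = {(k,j) \<in> idx b s. k \<noteq> i \<and> lam < p k j}"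
    using eq by auto
  then show ?thesis unfolding Dm_def by simp
qed

lemma Tf_local:
  assumes lam: "lam < 1" and alpha: "0 \<le> alpha"
    and eq: "\<forall>(k,j)\<in>idx b s. p k j = p' k j" and ij: "(i,j) \<in> idx b s"
  shows "Tf b s alpha lam p' i j = Tf b s alpha lam p i j"
  unfolding Tf_def cc_def Bn_local[OF lam alpha eq] Dm_local[OF eq]
  using eq ij by auto

lemma Tf_nonneg: "0 \<le> Tf b s alpha lam p i j"
  unfolding Tf_def by (intro sum_nonneg) auto

lemma Wf_sum:
  assumes N0: "N0 \<subseteq> idx b s"
  shows "(\<Sum>q\<in>N0. Wf b s lam p (fst q) (snd q)) \<le> 1"
proof -
  let ?D = "real (Dt b s lam p)"
  have fin: "finite N0" by (rule finite_subset[OF N0]) simp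
  have "(\<Sum>q\<in>N0. Wf b s lam p (fst q) (snd q)) \<le> (\<Sum>q\<in>N0. (if lam < p (fst q) (snd q) then 1 else 0) / ?D)"
  proof (rule sum_mono)
    fix q assume q: "q \<in> N0"
    obtain i j where qij: "q = (i,j)" by force
    have ij: "(i,j) \<in> idx b s" using q N0 qij by auto
    show "Wf b s lam p (fst q) (snd q) \<le> (if lam < p (fst q) (snd q) then 1 else 0) / ?D"
    proof (cases "lam < p i j")
      case True
      have "(i,j) \<in> {(k,j) \<in> idx b s. lam < p k j}" using ij True by auto
      then have "card {(i,j)} \<le> Dt b s lam p" unfolding Dt_def
        by (intro card_mono) auto
      then have "1 \<le> Dt b s lam p" by simp
      moreover have "Dt b s lam p \<le> Dm b s lam p i + smax b s" using ij by (intro Dt_le_Dm) (auto simp: idx_def)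
      ultimately show ?thesis using True qij unfolding Wf_def
        by (auto intro!: divide_left_mono)
    next
      case False
      then show ?thesis using qij by (simp add: Wf_def)
    qed
  qed
  also have "\<dots> = real (card {q \<in> N0. lam < p (fst q) (snd q)}) / ?D"
    using fin by (simp add: sum_divide_distrib[symmetric] sum.If_cases Int_def)
  also have "\<dots> \<le> 1"
  proof -
    have "{q \<in> N0. lam < p (fst q) (snd q)} \<subseteq> {(k,j) \<in> idx b s. lam < p k j}" using N0 by auto
    then have "card {q \<in> N0. lam < p (fst q) (snd q)} \<le> Dt b s lam p"
      unfolding Dt_def by (intro card_mono) auto
    then show ?thesis by (cases "Dt b s lam p = 0") auto
  qed
  finally show ?thesis .
qed


lemma Tf_ge:
  assumes "1 \<le> k" "k \<le> b" "Bn b s alpha lam p = k" "p i j \<le> cc b s alpha lam p i * real k"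
  shows "1 / real k \<le> Tf b s alpha lam p i j"
proof -
  have "(\<lambda>k. if Bn b s alpha lam p = k \<and> p i j \<le> cc b s alpha lam p i * real k then 1/real k else 0) k \<le> Tf b s alpha lam p i j"
    unfolding Tf_def by (rule member_le_sum) (use assms in auto)
  then show ?thesis using assms by simp
qed

lemma rej_bound:
  assumes lam: "lam < 1" and alpha: "0 < alpha" and nz: "Bset b s alpha lam p \<noteq> {}"
    and q: "(i,j) \<in> rejections b s alpha lam p"
  shows "(i,j) \<in> idx b s" "p i j \<le> cc b s alpha lam p i * real (Bn b s alpha lam p)"
proof -
  let ?B = "Bn b s alpha lam p"
  have B: "?B = Max (Bset b s alpha lam p)" using nz by (simp add: Bn_def)
  have Bin: "?B \<in> Bset b s alpha lam p" unfolding B using nz by (intro Max_in) auto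
  then have B1: "1 \<le> ?B" using Bset_range by blast
  have ij: "(i,j) \<in> idx b s" and qv: "Qv b s lam p i j \<le> real ?B * alpha / real (ntot b s)"
    using q nz unfolding rejections_def B Let_def by auto
  show "(i,j) \<in> idx b s" using ij .
  have i: "i < b" using ij by (auto simp: idx_def)
  let ?n = "real (ntot b s)"
  let ?D = "real (Dm b s lam p i) + real (smax b s)"
  have n: "0 < ?n" using ntot_pos by auto
  have D: "0 < ?D" using smax_pos by auto
  have l1: "0 < 1 - lam" using lam by auto
  have pi: "?D / ((1-lam) * ?n) \<le> pi0hat b s lam p"
    unfolding pi0hat_eq[OF lam] using Dt_le_Dm[OF i, of lam p] Dm_le_Dt[of lam p i] l1 n
    by (intro divide_right_mono) auto
  show "p i j \<le> cc b s alpha lam p i * real ?B"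
  proof (cases "p i j \<le> 0")
    case True
    have "0 \<le> cc b s alpha lam p i * real ?B" unfolding cc_def using alpha l1 D by auto
    then show ?thesis using True by linarith
  next
    case False
    have "?D / ((1-lam) * ?n) * p i j \<le> pi0hat b s lam p * p i j"
      using pi False by (intro mult_right_mono) auto
    also have "\<dots> \<le> real ?B * alpha / ?n" using qv by (simp add: Qv_def)
    finally have h: "?D / ((1-lam) * ?n) * p i j \<le> real ?B * alpha / ?n" .
    then have "?D * p i j \<le> real ?B * alpha * (1 - lam)"
      using aux1[OF n l1 h] by simp
    then have "p i j \<le> real ?B * alpha * (1 - lam) / ?D" using aux2[OF D] by blast
    also have "real ?B * alpha * (1 - lam) / ?D = cc b s alpha lam p i * real ?B"
      unfolding cc_def by simp
    finally show ?thesis .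
  qed
qed

lemma card_rej:
  assumes lam: "lam < 1" and alpha: "0 < alpha" and nz: "Bset b s alpha lam p \<noteq> {}"
  shows "Bn b s alpha lam p \<le> card (rejections b s alpha lam p)"
proof -
  let ?B = "Bn b s alpha lam p"
  let ?L = "sort (map (Ptil b s p) [0..<b])"
  let ?pi = "pi0hat b s lam p"
  let ?n = "real (ntot b s)"
  have B: "?B = Max (Bset b s alpha lam p)" using nz by (simp add: Bn_def)
  have Bin: "?B \<in> Bset b s alpha lam p" unfolding B using nz by (intro Max_in) auto
  then have B1: "1 \<le> ?B" "?B \<le> b" using Bset_range by blast+
  have QB: "Qtil_ord b s lam p ?B \<le> real ?B * alpha / real b" using Bin by (simp add: Bset_def)
  have pos: "0 < ?pi" using pi0hat_pos[OF lam] .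
  have n: "0 < ?n" using ntot_pos by auto
  have bb: "0 < real b" using b_pos by auto
  have R: "rejections b s alpha lam p = {(i,j) \<in> idx b s. Qtil b s lam p i \<le> Qtil_ord b s lam p ?B \<and> Qv b s lam p i j \<le> real ?B * alpha / ?n}"
    using nz by (simp add: rejections_def Let_def B[symmetric])
  have finR: "finite (rejections b s alpha lam p)" unfolding R by simp
  define G where "G = {i. i < b \<and> Ptil b s p i \<le> ?L ! (?B - 1)}"
  have cardG: "?B \<le> card G" unfolding G_def using sorted_count[OF B1, of "Ptil b s p" "?L ! (?B - 1)"] by simp
  define jm where "jm i = (SOME j. j < s i \<and> p i j = Min {p i j | j. j < s i})" for i
  have jm: "jm i < s i \<and> p i (jm i) = Min {p i j | j. j < s i}" if "i < b" for i
    unfolding jm_def using Min_attained[OF that, of p] by (rule someI_ex)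
  have sub: "(\<lambda>i. (i, jm i)) ` G \<subseteq> rejections b s alpha lam p"
  proof
    fix x assume "x \<in> (\<lambda>i. (i, jm i)) ` G"
    then obtain i where i: "i \<in> G" and x: "x = (i, jm i)" by auto
    have ib: "i < b" and le: "Ptil b s p i \<le> ?L ! (?B - 1)" using i by (auto simp: G_def)
    have q1: "Qtil b s lam p i \<le> Qtil_ord b s lam p ?B"
      unfolding Qtil_def Qtil_ord_def Ptil_ord_def using le pos by (intro mult_left_mono) auto
    have "?pi * (?n / real b * p i (jm i)) \<le> real ?B * alpha / real b"
      using q1 QB jm[OF ib] unfolding Qtil_def Ptil_def by simp
    then have "?pi * p i (jm i) \<le> real ?B * alpha / ?n"
      using aux3[OF n bb] by blast
    then have q2: "Qv b s lam p i (jm i) \<le> real ?B * alpha / ?n" by (simp add: Qv_def)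
    have "(i, jm i) \<in> idx b s" using jm[OF ib] ib by (simp add: idx_def)
    then show "x \<in> rejections b s alpha lam p"
      using q1 q2 x unfolding R by simp
  qed
  have "inj_on (\<lambda>i. (i, jm i)) G" by (auto intro: inj_onI)
  then have "card G = card ((\<lambda>i. (i, jm i)) ` G)" by (simp add: card_image)
  also have "\<dots> \<le> card (rejections b s alpha lam p)"
    by (intro card_mono sub finR)
  finally show ?thesis using cardG by simp
qed

lemma fdp_bound:
  assumes lam: "lam < 1" and alpha: "0 < alpha" and N0: "N0 \<subseteq> idx b s"
  shows "fdp N0 (rejections b s alpha lam p) \<le> (\<Sum>q\<in>N0. Tf b s alpha lam p (fst q) (snd q))"
proof (cases "Bset b s alpha lam p = {}")
  case True
  then have "rejections b s alpha lam p = {}" by (simp add: rejections_def)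
  then show ?thesis by (simp add: fdp_def sum_nonneg Tf_nonneg)
next
  case False
  let ?B = "Bn b s alpha lam p"
  let ?R = "rejections b s alpha lam p"
  have fin: "finite N0" by (rule finite_subset[OF N0]) simp
  have B: "?B = Max (Bset b s alpha lam p)" using False by (simp add: Bn_def)
  have Bin: "?B \<in> Bset b s alpha lam p" unfolding B using False by (intro Max_in) auto
  then have B1: "1 \<le> ?B" "?B \<le> b" using Bset_range by blast+
  have cR: "?B \<le> card ?R" using card_rej[OF lam alpha False] .
  have "fdp N0 ?R \<le> real (card (?R \<inter> N0)) / real ?B"
    unfolding fdp_def using B1 cR by (intro divide_left_mono) auto
  also have "\<dots> = (\<Sum>q\<in>N0. if q \<in> ?R then 1 / real ?B else 0)"
    using fin by (simp add: sum.If_cases Int_def conj_commute)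
  also have "\<dots> \<le> (\<Sum>q\<in>N0. Tf b s alpha lam p (fst q) (snd q))"
  proof (rule sum_mono)
    fix q assume "q \<in> N0"
    obtain i j where qij: "q = (i,j)" by force
    show "(if q \<in> ?R then 1 / real ?B else 0) \<le> Tf b s alpha lam p (fst q) (snd q)"
    proof (cases "q \<in> ?R")
      case True
      then have "p i j \<le> cc b s alpha lam p i * real ?B" using rej_bound(2)[OF lam alpha False] qij by auto
      then show ?thesis using True qij Tf_ge[OF B1 refl] by auto
    qed (simp add: Tf_nonneg)
  qed
  finally show ?thesis .
qed


lemma card_sum: "finite A \<Longrightarrow> real (card {q\<in>A. P q}) = (\<Sum>q\<in>A. if P q then 1 else 0)"
  by (simp add: sum.If_cases Int_def conj_commute)

lemma Bn_eq_iff: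
  "Bn b s alpha lam p = a \<longleftrightarrow>
    (a = 0 \<and> (\<forall>m\<in>{1..b}. m \<notin> Bset b s alpha lam p)) \<or>
    (a \<in> Bset b s alpha lam p \<and> (\<forall>m\<in>{a<..b}. m \<notin> Bset b s alpha lam p))"
proof (cases "Bset b s alpha lam p = {}")
  case True
  then show ?thesis by (auto simp: Bn_def)
next
  case False
  let ?S = "Bset b s alpha lam p"
  have M: "Max ?S \<in> ?S" using False by (intro Max_in) auto
  have M0: "Max ?S \<noteq> 0" using M Bset_range by fastforce
  show ?thesis
  proof
    assume "Bn b s alpha lam p = a"
    then have a: "a = Max ?S" using False by (simp add: Bn_def)
    have "\<forall>m\<in>{a<..b}. m \<notin> ?S" using a by (auto dest: Max_ge[OF finite_Bset])
    then show "(a = 0 \<and> (\<forall>m\<in>{1..b}. m \<notin> ?S)) \<or> (a \<in> ?S \<and> (\<forall>m\<in>{a<..b}. m \<notin> ?S))"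
      using a M by auto
  next
    assume h: "(a = 0 \<and> (\<forall>m\<in>{1..b}. m \<notin> ?S)) \<or> (a \<in> ?S \<and> (\<forall>m\<in>{a<..b}. m \<notin> ?S))"
    have "\<not> (\<forall>m\<in>{1..b}. m \<notin> ?S)" using M Bset_range by fastforce
    then have a: "a \<in> ?S" and up: "\<forall>m\<in>{a<..b}. m \<notin> ?S" using h by auto
    have "Max ?S \<le> a"
    proof (rule ccontr)
      assume "\<not> Max ?S \<le> a"
      then have "Max ?S \<in> {a<..b}" using Bset_range[OF M] by auto
      then show False using up M by blast
    qed
    moreover have "a \<le> Max ?S" using a by (intro Max_ge) auto
    ultimately have "Max ?S = a" by (rule antisym)
    then show "Bn b s alpha lam p = a" using False by (simp add: Bn_def)
  qed
qed

context
  fixes N :: "'a measure" and f :: "'a \<Rightarrow> nat \<Rightarrow> nat \<Rightarrow> real"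
  assumes fm: "\<And>k j. k<b \<Longrightarrow> j<s k \<Longrightarrow> (\<lambda>x. f x k j) \<in> borel_measurable N"
begin

lemma meas_idx_count:
  assumes Q: "\<And>k j. (k,j) \<in> idx b s \<Longrightarrow> Measurable.pred N (\<lambda>x. Q k j (f x k j))"
  shows "(\<lambda>x. real (card {(k,j)\<in>idx b s. Q k j (f x k j)})) \<in> borel_measurable N"
proof -
  have eq: "real (card {(k,j)\<in>idx b s. Q k j (f x k j)}) = (\<Sum>q\<in>idx b s. if Q (fst q) (snd q) (f x (fst q) (snd q)) then 1 else 0)" for x
  proof -
    have "{(k,j)\<in>idx b s. Q k j (f x k j)} = {q\<in>idx b s. Q (fst q) (snd q) (f x (fst q) (snd q))}" by auto
    then show ?thesis using card_sum[OF finite_idx] by simp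
  qed
  show ?thesis unfolding eq
  proof (rule borel_measurable_sum)
    fix q assume q: "q \<in> idx b s"
    have [measurable]: "Measurable.pred N (\<lambda>x. Q (fst q) (snd q) (f x (fst q) (snd q)))" using Q[of "fst q" "snd q"] q by simp
    show "(\<lambda>x. if Q (fst q) (snd q) (f x (fst q) (snd q)) then 1 else 0 :: real) \<in> borel_measurable N"
      by measurable
  qed
qed

lemma fm_idx: "(k,j) \<in> idx b s \<Longrightarrow> (\<lambda>x. f x k j) \<in> borel_measurable N"
  using fm by (auto simp: idx_def)

lemma meas_Dt: "(\<lambda>x. real (Dt b s lam (f x))) \<in> borel_measurable N"
  unfolding Dt_def
  by (rule meas_idx_count[where Q="\<lambda>k j v. lam < v"]) (use fm_idx in measurable)

lemma meas_Dm: "(\<lambda>x. real (Dm b s lam (f x) i)) \<in> borel_measurable N"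
  unfolding Dm_def
  by (rule meas_idx_count[where Q="\<lambda>k j v. k \<noteq> i \<and> lam < v"]) (use fm_idx in measurable)

lemma meas_pi0: "lam < 1 \<Longrightarrow> (\<lambda>x. pi0hat b s lam (f x)) \<in> borel_measurable N"
  unfolding pi0hat_eq using meas_Dt by measurable

lemma meas_Ptil: "i < b \<Longrightarrow> (\<lambda>x. Ptil b s (f x) i) \<in> borel_measurable N"
proof -
  assume i: "i < b"
  have "(\<lambda>x. Min ((\<lambda>j. f x i j) ` {..<s i})) \<in> borel_measurable N"
    by (rule borel_measurable_Min) (use fm i in auto)
  then show ?thesis unfolding Ptil_def Ptil_set by measurable
qed

lemma pred_Bset: "lam < 1 \<Longrightarrow> Measurable.pred N (\<lambda>x. m \<in> Bset b s alpha lam (f x))"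
proof -
  assume lam: "lam < 1"
  let ?c = "real m * alpha / real b"
  have eq: "m \<in> Bset b s alpha lam (f x) \<longleftrightarrow> 1 \<le> m \<and> m \<le> b \<and>
      real m \<le> (\<Sum>i<b. if Ptil b s (f x) i \<le> ?c / pi0hat b s lam (f x) then 1 else 0)" for x
  proof -
    have "real (card {i. i < b \<and> Ptil b s (f x) i \<le> ?c / pi0hat b s lam (f x)})
      = real (card {i\<in>{..<b}. Ptil b s (f x) i \<le> ?c / pi0hat b s lam (f x)})" by (simp add: lessThan_def)
    also have "\<dots> = (\<Sum>i<b. if Ptil b s (f x) i \<le> ?c / pi0hat b s lam (f x) then 1 else 0)"
      by (rule card_sum) simp
    finally show ?thesis unfolding Bset_char[OF lam] by linarith
  qed
  have [measurable]: "(\<lambda>x. pi0hat b s lam (f x)) \<in> borel_measurable N" using meas_pi0[OF lam] .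
  have [measurable]: "\<And>i. i \<in> {..<b} \<Longrightarrow> (\<lambda>x. Ptil b s (f x) i) \<in> borel_measurable N" using meas_Ptil by auto
  show ?thesis unfolding eq by measurable
qed

lemma meas_Bn: "lam < 1 \<Longrightarrow> (\<lambda>x. Bn b s alpha lam (f x)) \<in> measurable N (count_space UNIV)"
proof -
  assume lam: "lam < 1"
  have [measurable]: "\<And>m. Measurable.pred N (\<lambda>x. m \<in> Bset b s alpha lam (f x))" using pred_Bset[OF lam] .
  have "Measurable.pred N (\<lambda>x. Bn b s alpha lam (f x) = a)" for a
    unfolding Bn_eq_iff by measurable
  then have "{x\<in>space N. Bn b s alpha lam (f x) = a} \<in> sets N" for a by (rule predE)
  then show ?thesis
    unfolding measurable_count_space_eq2_countable by (auto simp: vimage_def Int_def conj_commute)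
qed

lemma meas_Tf: "lam < 1 \<Longrightarrow> (i,j) \<in> idx b s \<Longrightarrow> (\<lambda>x. Tf b s alpha lam (f x) i j) \<in> borel_measurable N"
proof -
  assume lam: "lam < 1" and ij: "(i,j) \<in> idx b s"
  have [measurable]: "(\<lambda>x. Bn b s alpha lam (f x)) \<in> measurable N (count_space UNIV)" using meas_Bn[OF lam] .
  have [measurable]: "(\<lambda>x. real (Dm b s lam (f x) i)) \<in> borel_measurable N" using meas_Dm .
  have [measurable]: "(\<lambda>x. f x i j) \<in> borel_measurable N" using fm_idx[OF ij] .
  show ?thesis unfolding Tf_def cc_def by measurable
qed

lemma meas_Wf: "(i,j) \<in> idx b s \<Longrightarrow> (\<lambda>x. Wf b s lam (f x) i j) \<in> borel_measurable N"
proof -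
  assume ij: "(i,j) \<in> idx b s"
  have [measurable]: "(\<lambda>x. real (Dm b s lam (f x) i)) \<in> borel_measurable N" using meas_Dm .
  have [measurable]: "(\<lambda>x. f x i j) \<in> borel_measurable N" using fm_idx[OF ij] .
  show ?thesis unfolding Wf_def by measurable
qed

end

end


lemma real_lim_aux:
  fixes a m u :: real
  assumes u: "0 < u" "u < 1" and m: "0 \<le> m" and h: "\<And>w. u \<le> w \<Longrightarrow> w < 1 \<Longrightarrow> a \<le> m / w"
  shows "a \<le> m"
proof (rule ccontr)
  assume "\<not> a \<le> m"
  then have am: "m < a" by simp
  then have a0: "0 < a" using m by simp
  have ma: "m / a < 1" using am a0 by simp
  define w where "w = max u ((1 + m/a)/2)"
  have w1: "w < 1" using ma u unfolding w_def by auto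
  have wu: "u \<le> w" unfolding w_def by simp
  have w0: "0 < w" using u wu by simp
  have aux: "x < (1+x)/2" if "x<1" for x::real using that by simp
  have "m / a < (1 + m/a)/2" using aux[OF ma] .
  then have "m / a < w" unfolding w_def by (simp add: less_max_iff_disj)
  then have "m < a * w" using a0 by (simp add: divide_less_eq mult.commute)
  then have "m / w < a" using w0 by (simp add: divide_less_eq mult.commute)
  then show False using h[OF wu w1] by simp
qed

context
  fixes M :: "'a measure" and t :: "'a \<Rightarrow> real" and E :: "nat \<Rightarrow> 'a set" and c :: real
  assumes P: "prob_space M"
    and tm: "t \<in> borel_measurable M"
    and tu: "\<And>u. 0 \<le> u \<Longrightarrow> u \<le> 1 \<Longrightarrow> measure M {\<omega>\<in>space M. t \<omega> \<le> u} = u"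
    and Es: "\<And>m. E m \<in> sets M"
    and Em: "\<And>m. E m \<subseteq> E (Suc m)"
    and ratio: "\<And>m u v. 0 < u \<Longrightarrow> u \<le> v \<Longrightarrow> v < 1 \<Longrightarrow>
        measure M (E m \<inter> {\<omega>\<in>space M. t \<omega> \<le> u}) / u \<le> measure M (E m \<inter> {\<omega>\<in>space M. t \<omega> \<le> v}) / v"
    and c: "0 < c"
begin

interpretation prob_space M by (rule P)

abbreviation "T u \<equiv> {\<omega>\<in>space M. t \<omega> \<le> u}"

lemma T_sets[simp]: "T u \<in> sets M"
  using tm by measurable

lemma T_big: "1 \<le> u \<Longrightarrow> measure M (T u) = 1"
proof -
  assume "1 \<le> u"
  then have "T 1 \<subseteq> T u" by auto
  then have "measure M (T 1) \<le> measure M (T u)" by (intro finite_measure_mono) auto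
  moreover have "measure M (T 1) = 1" using tu[of 1] by simp
  moreover have "measure M (T u) \<le> 1" by simp
  ultimately show ?thesis by linarith
qed

lemma T_meas: "0 \<le> u \<Longrightarrow> measure M (T u) = min u 1"
  using tu T_big by (cases "u \<le> 1") auto

lemma E_full: "1 \<le> v \<Longrightarrow> measure M (E m \<inter> T v) = measure M (E m)"
proof -
  assume v: "1 \<le> v"
  have "E m \<subseteq> (E m \<inter> T v) \<union> (space M - T v)" using sets.sets_into_space[OF Es[of m]] by auto
  moreover have "(E m \<inter> T v) \<union> (space M - T v) \<in> sets M"
    by (intro sets.Un sets.Diff sets.Int Es T_sets sets.top)
  ultimately have "measure M (E m) \<le> measure M ((E m \<inter> T v) \<union> (space M - T v))"
    by (intro finite_measure_mono) auto
  also have "\<dots> \<le> measure M (E m \<inter> T v) + measure M (space M - T v)"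
    by (intro measure_Un_le sets.Diff sets.Int Es T_sets sets.top)
  also have "measure M (space M - T v) = 0"
    using prob_compl[of "T v"] T_big[OF v] by simp
  finally have "measure M (E m) \<le> measure M (E m \<inter> T v)" by simp
  moreover have "measure M (E m \<inter> T v) \<le> measure M (E m)"
    using Es by (intro finite_measure_mono) auto
  ultimately show ?thesis by linarith
qed

definition F where "F m u = measure M (E m \<inter> T u) / min u 1"

lemma F_mono:
  assumes u: "0 < u" and uv: "u \<le> v"
  shows "F m u \<le> F m v"
proof (cases "v < 1")
  case True
  then show ?thesis using ratio[OF u uv True] u uv unfolding F_def by simp
next
  case False
  then have v: "1 \<le> v" by simp
  have Fv: "F m v = measure M (E m)" unfolding F_def using E_full[OF v] v by simp
  show ?thesis
  proof (cases "u < 1")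
    case False
    then show ?thesis unfolding F_def using E_full[of u] E_full[OF v] v by simp
  next
    case True
    have "measure M (E m \<inter> T u) / u \<le> measure M (E m)"
    proof (rule real_lim_aux[OF u True])
      show "0 \<le> measure M (E m)" by simp
      fix w assume w: "u \<le> w" "w < 1"
      have "measure M (E m \<inter> T u) / u \<le> measure M (E m \<inter> T w) / w" by (rule ratio[OF u w])
      also have "\<dots> \<le> measure M (E m) / w"
        using Es u w by (intro divide_right_mono finite_measure_mono) auto
      finally show "measure M (E m \<inter> T u) / u \<le> measure M (E m) / w" .
    qed
    then show ?thesis using Fv True unfolding F_def by simp
  qed
qed

lemma F_le1: "0 < u \<Longrightarrow> F m u \<le> 1"
proof -
  assume u: "0 < u"
  have "measure M (E m \<inter> T u) \<le> measure M (T u)" using Es by (intro finite_measure_mono) auto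
  then have "measure M (E m \<inter> T u) \<le> min u 1" using T_meas[of u] u by simp
  moreover have "0 < min u 1" using u by simp
  ultimately show ?thesis unfolding F_def by simp
qed

lemma E_mono_le: "m \<le> n \<Longrightarrow> E m \<subseteq> E n"
  by (induction n rule: dec_induct) (use Em in auto)

lemma term_eq:
  assumes k: "1 \<le> k"
  shows "measure M ((E k - E (k-1)) \<inter> T (c*k)) / real k
      = (min (c*k) 1 / real k) * (F k (c*k) - F (k-1) (c*k))"
proof -
  have sub: "E (k-1) \<inter> T (c*k) \<subseteq> E k \<inter> T (c*k)" using E_mono_le[of "k-1" k] by auto
  have "(E k - E (k-1)) \<inter> T (c*k) = (E k \<inter> T (c*k)) - (E (k-1) \<inter> T (c*k))" by auto
  then have "measure M ((E k - E (k-1)) \<inter> T (c*k)) = measure M (E k \<inter> T (c*k)) - measure M (E (k-1) \<inter> T (c*k))"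
    using sub by (simp add: finite_measure_Diff sets.Int Es)
  moreover have mp: "0 < min (c*k) 1" using c k by simp
  have eA: "measure M (E k \<inter> T (c*k)) = min (c*k) 1 * F k (c*k)" unfolding F_def using mp by simp
  have eB: "measure M (E (k-1) \<inter> T (c*k)) = min (c*k) 1 * F (k-1) (c*k)" unfolding F_def using mp by simp
  have "(min (c*k) 1 * F k (c*k) - min (c*k) 1 * F (k-1) (c*k)) / real k = (min (c*k) 1 / real k) * (F k (c*k) - F (k-1) (c*k))"
    by (simp add: field_simps)
  ultimately show ?thesis using eA eB by simp
qed

lemma term_le:
  assumes k: "1 \<le> k"
  shows "measure M ((E k - E (k-1)) \<inter> T (c*k)) / real k \<le> c * (F k (c*k) - F (k-1) (c*k))"
proof -
  have ck: "0 < c*k" using c k by simp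
  have "measure M (E (k-1) \<inter> T (c*k)) \<le> measure M (E k \<inter> T (c*k))"
    using E_mono_le[of "k-1" k] Es by (intro finite_measure_mono) auto
  then have d: "0 \<le> F k (c*k) - F (k-1) (c*k)" unfolding F_def using ck by (simp add: divide_right_mono)
  have "min (c*k) 1 / real k \<le> c" using k c by (simp add: divide_le_eq)
  then have h: "(min (c*k) 1 / real k) * (F k (c*k) - F (k-1) (c*k)) \<le> c * (F k (c*k) - F (k-1) (c*k))"
    using d by (intro mult_right_mono) auto
  show ?thesis by (subst term_eq[OF k]) (rule h)
qed

lemma telescope: "1 \<le> m \<Longrightarrow> (\<Sum>k\<in>{1..m}. measure M ((E k - E (k-1)) \<inter> T (c*k)) / real k) \<le> c * F m (c*m)"
proof (induction m rule: dec_induct)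
  case base
  have "measure M ((E 1 - E 0) \<inter> T c) \<le> measure M (E 1 \<inter> T c)"
    using Es by (intro finite_measure_mono) auto
  also have "\<dots> = min c 1 * F 1 c" unfolding F_def using c by simp
  also have "\<dots> \<le> c * F 1 c"
  proof (rule mult_right_mono)
    show "0 \<le> F 1 c" unfolding F_def using c by simp
  qed simp
  finally show ?case by simp
next
  case (step m)
  have "(\<Sum>k\<in>{1..Suc m}. measure M ((E k - E (k-1)) \<inter> T (c*k)) / real k)
      = (\<Sum>k\<in>{1..m}. measure M ((E k - E (k-1)) \<inter> T (c*k)) / real k) + measure M ((E (Suc m) - E m) \<inter> T (c*Suc m)) / real (Suc m)"
    by simp
  also have "\<dots> \<le> c * F m (c*m) + c * (F (Suc m) (c * Suc m) - F m (c * Suc m))"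
    using step.IH term_le[of "Suc m"] by simp
  also have "\<dots> \<le> c * F (Suc m) (c * Suc m)"
  proof -
    have "F m (c*m) \<le> F m (c * Suc m)" using step.hyps c by (intro F_mono) auto
    then show ?thesis using c by (simp add: algebra_simps)
  qed
  finally show ?case .
qed

lemma prds_sum: "(\<Sum>k\<in>{1..b}. measure M ((E k - E (k-1)) \<inter> T (c*k)) / real k) \<le> c"
proof (cases "b = 0")
  case True then show ?thesis using c by simp
next
  case False
  then have "(\<Sum>k\<in>{1..b}. measure M ((E k - E (k-1)) \<inter> T (c*k)) / real k) \<le> c * F b (c*b)"
    by (intro telescope) auto
  also have "\<dots> \<le> c * 1" using F_le1[of "c*b" b] c False by (intro mult_left_mono) auto
  finally show ?thesis by simp
qed

end


lemma Dm_upd: "Dm b s lam (x(i:=z)) i = Dm b s lam x i"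
proof -
  have "{(k,j) \<in> idx b s. k \<noteq> i \<and> lam < (x(i:=z)) k j} = {(k,j) \<in> idx b s. k \<noteq> i \<and> lam < x k j}"
    by auto
  then show ?thesis unfolding Dm_def by simp
qed

lemma cc_upd: "cc b s alpha lam (x(i:=z)) i = cc b s alpha lam x i"
  unfolding cc_def Dm_upd ..

lemma Tf_le: "Tf b s alpha lam p i j \<le> real b"
proof -
  have "Tf b s alpha lam p i j \<le> (\<Sum>k\<in>{1..b}. (1::real))"
    unfolding Tf_def by (intro sum_mono) auto
  then show ?thesis by simp
qed

lemma abs_Tf_le: "1 \<le> b \<Longrightarrow> \<forall>i<b. 1 \<le> s i \<Longrightarrow> \<bar>Tf b s alpha lam p i j\<bar> \<le> real b"
  using Tf_nonneg[of b s alpha lam p i j] Tf_le[of b s alpha lam p i j] by auto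

lemma Wf_bounds:
  assumes "1 \<le> b" "\<forall>i<b. 1 \<le> s i"
  shows "0 \<le> Wf b s lam p i j" "Wf b s lam p i j \<le> 1"
proof -
  have D: "1 \<le> real (Dm b s lam p i) + real (smax b s)" using smax_pos[OF assms] by simp
  show "0 \<le> Wf b s lam p i j" unfolding Wf_def using D by simp
  show "Wf b s lam p i j \<le> 1" unfolding Wf_def using D by simp
qed

lemma abs_Wf_le: "1 \<le> b \<Longrightarrow> \<forall>i<b. 1 \<le> s i \<Longrightarrow> \<bar>Wf b s lam p i j\<bar> \<le> 1"
  using Wf_bounds[of b s lam p i j] by auto

context
  fixes M :: "'w measure" and P :: "'w \<Rightarrow> nat \<Rightarrow> nat \<Rightarrow> real"
    and b :: nat and s :: "nat \<Rightarrow> nat" and N0 :: "(nat \<times> nat) set"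
    and alpha lam :: real
  assumes prob: "prob_space M"
    and b_pos: "b \<ge> 1"
    and s_pos: "\<forall>i<b. s i \<ge> 1"
    and meas: "\<forall>i<b. \<forall>j<s i. (\<lambda>\<omega>. P \<omega> i j) \<in> borel_measurable M"
    and N0_sub: "N0 \<subseteq> idx b s"
    and unif: "\<forall>(i,j)\<in>N0. \<forall>u\<in>{0..1}.
                 measure M {\<omega>\<in>space M. P \<omega> i j \<le> u} = u"
    and posdep: "\<forall>(i,j)\<in>N0. \<forall>\<phi> :: (nat \<Rightarrow> real) \<Rightarrow> real.
        (\<phi> \<in> borel_measurable (PiM {..<s i} (\<lambda>_. borel))
         \<and> (\<forall>x y. (\<forall>k<s i. x k \<le> y k) \<longrightarrow> \<phi> x \<le> \<phi> y)
         \<and> integrable M (\<lambda>\<omega>. \<phi> (row s P i \<omega>)))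
        \<longrightarrow> (\<forall>u v. 0 < u \<and> u \<le> v \<and> v < 1 \<longrightarrow>
              (\<integral>\<omega>. \<phi> (row s P i \<omega>) * indicator {\<omega>\<in>space M. P \<omega> i j \<le> u} \<omega> \<partial>M)
                / measure M {\<omega>\<in>space M. P \<omega> i j \<le> u}
              \<le> (\<integral>\<omega>. \<phi> (row s P i \<omega>) * indicator {\<omega>\<in>space M. P \<omega> i j \<le> v} \<omega> \<partial>M)
                / measure M {\<omega>\<in>space M. P \<omega> i j \<le> v})"
    and alpha: "0 < alpha"
    and lam: "0 \<le> lam" "lam < 1"
begin

interpretation prob_space M by (rule prob)

lemma row_eq: "j < s i \<Longrightarrow> row s P i \<omega> j = P \<omega> i j"
  by (simp add: row_def)

lemma fm_upd:
  assumes i: "i < b"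
  shows "\<And>k j'. k<b \<Longrightarrow> j'<s k \<Longrightarrow> (\<lambda>\<omega>. (x(i:=row s P i \<omega>)) k j') \<in> borel_measurable M"
proof -
  fix k j' assume k: "k < b" and j': "j' < s k"
  show "(\<lambda>\<omega>. (x(i:=row s P i \<omega>)) k j') \<in> borel_measurable M"
  proof (cases "k = i")
    case True
    then have "(\<lambda>\<omega>. (x(i:=row s P i \<omega>)) k j') = (\<lambda>\<omega>. P \<omega> i j')" using j' by (simp add: row_eq)
    then show ?thesis using meas k j' True by simp
  next
    case False
    then show ?thesis by simp
  qed
qed

lemma fm_MS:
  assumes i: "i < b"
  shows "\<And>k j'. k<b \<Longrightarrow> j'<s k \<Longrightarrow> (\<lambda>z. (x(i:=z)) k j') \<in> borel_measurable (PiM {..<s i} (\<lambda>_. borel))"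
proof -
  fix k j' assume k: "k < b" and j': "j' < s k"
  show "(\<lambda>z. (x(i:=z)) k j') \<in> borel_measurable (PiM {..<s i} (\<lambda>_. borel))"
  proof (cases "k = i")
    case True
    then show ?thesis using j' by simp
  next
    case False
    then show ?thesis by simp
  qed
qed

lemma inner_T:
  assumes ij: "(i,j) \<in> N0"
  shows "(\<integral>\<omega>. Tf b s alpha lam (x(i:=row s P i \<omega>)) i j \<partial>M) \<le> cc b s alpha lam x i"
proof -
  have ijx: "(i,j) \<in> idx b s" using ij N0_sub by auto
  then have i: "i < b" and j: "j < s i" by (auto simp: idx_def)
  define f where "f \<omega> = x(i:=row s P i \<omega>)" for \<omega>
  define c where "c = cc b s alpha lam x i"
  define E where "E m = {\<omega>\<in>space M. Bn b s alpha lam (f \<omega>) \<le> m}" for m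
  define t where "t \<omega> = P \<omega> i j" for \<omega>
  have c: "0 < c" unfolding c_def cc_def using alpha lam smax_pos[OF b_pos s_pos] by auto
  have ccf: "cc b s alpha lam (f \<omega>) i = c" for \<omega> unfolding f_def c_def by (rule cc_upd)
  have fij: "f \<omega> i j = t \<omega>" for \<omega> unfolding f_def t_def using j by (simp add: row_eq)
  have fm: "\<And>k j'. k<b \<Longrightarrow> j'<s k \<Longrightarrow> (\<lambda>\<omega>. f \<omega> k j') \<in> borel_measurable M"
    unfolding f_def using fm_upd[OF i] by blast
  have Bnm[measurable]: "(\<lambda>\<omega>. Bn b s alpha lam (f \<omega>)) \<in> measurable M (count_space UNIV)"
    by (rule meas_Bn[OF b_pos s_pos fm lam(2)])
  have tm[measurable]: "t \<in> borel_measurable M" unfolding t_def using meas i j by simp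
  have Es: "E m \<in> sets M" for m unfolding E_def by measurable
  have Em: "E m \<subseteq> E (Suc m)" for m unfolding E_def by auto
  have tu: "measure M {\<omega>\<in>space M. t \<omega> \<le> u} = u" if "0 \<le> u" "u \<le> 1" for u
    using unif ij that unfolding t_def by auto
  have ratio: "measure M (E m \<inter> {\<omega>\<in>space M. t \<omega> \<le> u}) / u \<le> measure M (E m \<inter> {\<omega>\<in>space M. t \<omega> \<le> v}) / v"
    if uv: "0 < u" "u \<le> v" "v < 1" for m u v
  proof -
    have a0: "0 \<le> alpha" using alpha by simp
    define \<phi> where "\<phi> z = (if Bn b s alpha lam (x(i:=z)) \<le> m then 1 else 0 :: real)" for z
    have Bz[measurable]: "(\<lambda>z. Bn b s alpha lam (x(i:=z))) \<in> measurable (PiM {..<s i} (\<lambda>_. borel)) (count_space UNIV)"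
      by (rule meas_Bn[OF b_pos s_pos fm_MS[OF i] lam(2)])
    have \<phi>m: "\<phi> \<in> borel_measurable (PiM {..<s i} (\<lambda>_. borel))" unfolding \<phi>_def by measurable
    have \<phi>mono: "\<forall>z z'. (\<forall>k<s i. z k \<le> z' k) \<longrightarrow> \<phi> z \<le> \<phi> z'"
    proof (intro allI impI)
      fix z z' :: "nat \<Rightarrow> real" assume le: "\<forall>k<s i. z k \<le> z' k"
      have "\<forall>(k,j')\<in>idx b s. (x(i:=z)) k j' \<le> (x(i:=z')) k j'" using le by (auto simp: idx_def)
      then have "Bn b s alpha lam (x(i:=z')) \<le> Bn b s alpha lam (x(i:=z))"
        by (rule Bn_mono[OF b_pos s_pos lam(2) a0])
      then show "\<phi> z \<le> \<phi> z'" unfolding \<phi>_def by auto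
    qed
    have rowm: "row s P i \<in> measurable M (PiM {..<s i} (\<lambda>_. borel))"
      unfolding row_def using meas i by (intro measurable_restrict) auto
    have \<phi>int: "integrable M (\<lambda>\<omega>. \<phi> (row s P i \<omega>))"
    proof (rule integrable_const_bound[where B=1])
      show "(\<lambda>\<omega>. \<phi> (row s P i \<omega>)) \<in> borel_measurable M" by (rule measurable_compose[OF rowm \<phi>m])
    qed (simp add: \<phi>_def)
    have key: "(\<integral>\<omega>. \<phi> (row s P i \<omega>) * indicator {\<omega>\<in>space M. P \<omega> i j \<le> u} \<omega> \<partial>M)
                / measure M {\<omega>\<in>space M. P \<omega> i j \<le> u}
              \<le> (\<integral>\<omega>. \<phi> (row s P i \<omega>) * indicator {\<omega>\<in>space M. P \<omega> i j \<le> v} \<omega> \<partial>M)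
                / measure M {\<omega>\<in>space M. P \<omega> i j \<le> v}"
      using posdep ij \<phi>m \<phi>mono \<phi>int uv by blast
    have int_eq: "(\<integral>\<omega>. \<phi> (row s P i \<omega>) * indicator {\<omega>\<in>space M. P \<omega> i j \<le> w} \<omega> \<partial>M)
        = measure M (E m \<inter> {\<omega>\<in>space M. t \<omega> \<le> w})" for w
    proof -
      have "(\<integral>\<omega>. \<phi> (row s P i \<omega>) * indicator {\<omega>\<in>space M. P \<omega> i j \<le> w} \<omega> \<partial>M)
          = (\<integral>\<omega>. indicator (E m \<inter> {\<omega>\<in>space M. t \<omega> \<le> w}) \<omega> \<partial>M)"
        by (rule Bochner_Integration.integral_cong[OF refl]) (auto simp: \<phi>_def E_def f_def t_def indicator_def)
      also have "\<dots> = measure M (E m \<inter> {\<omega>\<in>space M. t \<omega> \<le> w})"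
        by (simp add: Int_absorb2 Int_lower2 E_def)
      finally show ?thesis .
    qed
    have mu: "measure M {\<omega>\<in>space M. P \<omega> i j \<le> u} = u" "measure M {\<omega>\<in>space M. P \<omega> i j \<le> v} = v"
      using tu[of u] tu[of v] uv unfolding t_def by auto
    show ?thesis using key unfolding int_eq mu .
  qed
  have ps: "(\<Sum>k\<in>{1..b}. measure M ((E k - E (k-1)) \<inter> {\<omega>\<in>space M. t \<omega> \<le> c*k}) / real k) \<le> c"
    by (rule prds_sum[where M=M and t=t and E=E and c=c, OF prob tm tu Es Em ratio c])
  have pt: "Tf b s alpha lam (f \<omega>) i j = (\<Sum>k\<in>{1..b}. indicator ((E k - E (k-1)) \<inter> {\<omega>\<in>space M. t \<omega> \<le> c*k}) \<omega> / real k)"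
    if w: "\<omega> \<in> space M" for \<omega>
    unfolding Tf_def ccf fij
  proof (intro sum.cong refl)
    fix k assume k: "k \<in> {1..b}"
    show "(if Bn b s alpha lam (f \<omega>) = k \<and> t \<omega> \<le> c * real k then 1 / real k else 0) =
         indicator ((E k - E (k - 1)) \<inter> {\<omega> \<in> space M. t \<omega> \<le> c * real k}) \<omega> / real k"
      using k w by (auto simp: E_def indicator_def)
  qed
  have "(\<integral>\<omega>. Tf b s alpha lam (f \<omega>) i j \<partial>M) = (\<integral>\<omega>. (\<Sum>k\<in>{1..b}. indicator ((E k - E (k-1)) \<inter> {\<omega>\<in>space M. t \<omega> \<le> c*k}) \<omega> / real k) \<partial>M)"
    by (rule Bochner_Integration.integral_cong[OF refl]) (auto simp: pt)
  also have "\<dots> = (\<Sum>k\<in>{1..b}. (\<integral>\<omega>. indicator ((E k - E (k-1)) \<inter> {\<omega>\<in>space M. t \<omega> \<le> c*k}) \<omega> / real k \<partial>M))"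
  proof (rule Bochner_Integration.integral_sum)
    fix k assume "k \<in> {1..b}"
    have "(E k - E (k-1)) \<inter> {\<omega>\<in>space M. t \<omega> \<le> c*k} \<in> sets M" using Es by measurable
    then show "integrable M (\<lambda>\<omega>. indicator ((E k - E (k-1)) \<inter> {\<omega>\<in>space M. t \<omega> \<le> c*k}) \<omega> / real k)"
      by (intro integrable_divide_zero integrable_real_indicator) (auto simp: less_top[symmetric])
  qed
  also have "\<dots> = (\<Sum>k\<in>{1..b}. measure M ((E k - E (k-1)) \<inter> {\<omega>\<in>space M. t \<omega> \<le> c*k}) / real k)"
  proof (intro sum.cong refl)
    fix k assume "k \<in> {1..b}"
    have "(E k - E (k-1)) \<inter> {\<omega>\<in>space M. t \<omega> \<le> c*k} \<inter> space M = (E k - E (k-1)) \<inter> {\<omega>\<in>space M. t \<omega> \<le> c*k}" by auto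
    then show "(\<integral>\<omega>. indicator ((E k - E (k-1)) \<inter> {\<omega>\<in>space M. t \<omega> \<le> c*k}) \<omega> / real k \<partial>M) = measure M ((E k - E (k-1)) \<inter> {\<omega>\<in>space M. t \<omega> \<le> c*k}) / real k"
      by simp
  qed
  also have "\<dots> \<le> c" by (rule ps)
  finally show ?thesis unfolding f_def c_def .
qed

lemma inner_W:
  assumes ij: "(i,j) \<in> N0"
  shows "(\<integral>\<omega>. Wf b s lam (x(i:=row s P i \<omega>)) i j \<partial>M) = (1 - lam) / (real (Dm b s lam x i) + real (smax b s))"
proof -
  have ijx: "(i,j) \<in> idx b s" using ij N0_sub by auto
  then have i: "i < b" and j: "j < s i" by (auto simp: idx_def)
  define D where "D = real (Dm b s lam x i) + real (smax b s)"
  have tm[measurable]: "(\<lambda>\<omega>. P \<omega> i j) \<in> borel_measurable M" using meas i j by simp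
  have "(\<integral>\<omega>. Wf b s lam (x(i:=row s P i \<omega>)) i j \<partial>M) = (\<integral>\<omega>. indicator {\<omega>\<in>space M. lam < P \<omega> i j} \<omega> / D \<partial>M)"
  proof (rule Bochner_Integration.integral_cong[OF refl])
    fix \<omega> assume "\<omega> \<in> space M"
    show "Wf b s lam (x(i:=row s P i \<omega>)) i j = indicator {\<omega>\<in>space M. lam < P \<omega> i j} \<omega> / D"
      using \<open>\<omega> \<in> space M\<close> j unfolding Wf_def Dm_upd D_def by (simp add: row_eq indicator_def)
  qed
  also have "\<dots> = measure M {\<omega>\<in>space M. lam < P \<omega> i j} / D"
    by (simp add: Int_absorb2)
  also have "measure M {\<omega>\<in>space M. lam < P \<omega> i j} = 1 - lam"
  proof -
    have "{\<omega>\<in>space M. lam < P \<omega> i j} = space M - {\<omega>\<in>space M. P \<omega> i j \<le> lam}" by auto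
    moreover have "measure M {\<omega>\<in>space M. P \<omega> i j \<le> lam} = lam" using unif ij lam by auto
    moreover have "{\<omega>\<in>space M. P \<omega> i j \<le> lam} \<in> events" by measurable
    ultimately show ?thesis using prob_compl by simp
  qed
  finally show ?thesis unfolding D_def .
qed


definition MSp :: "nat \<Rightarrow> (nat \<Rightarrow> real) measure" where "MSp k = PiM {..<s k} (\<lambda>_. borel)"

lemma rowm: "k < b \<Longrightarrow> row s P k \<in> measurable M (MSp k)"
  unfolding row_def MSp_def using meas by (intro measurable_restrict) auto

definition "muP k = (if k < b then distr M (MSp k) (row s P k) else distr M (MSp 0) (row s P 0))"

lemma muP_prob: "prob_space (muP k)"
  unfolding muP_def using rowm b_pos by (auto intro!: prob_space_distr)

lemma sets_muP: "k < b \<Longrightarrow> sets (muP k) = sets (MSp k)"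
  unfolding muP_def by simp

lemma coord_Omega: "k < b \<Longrightarrow> j < s k \<Longrightarrow> (\<lambda>y. y k j) \<in> borel_measurable (PiM {..<b} muP)"
proof -
  assume k: "k < b" and j: "j < s k"
  have 1: "(\<lambda>y. y k) \<in> measurable (PiM {..<b} muP) (muP k)"
    using k by (intro measurable_component_singleton) auto
  have "(\<lambda>z. z j) \<in> borel_measurable (MSp k)" unfolding MSp_def using j by simp
  then have 2: "(\<lambda>z. z j) \<in> borel_measurable (muP k)"
  proof -
    have "borel_measurable (muP k) = (borel_measurable (MSp k) :: ((nat \<Rightarrow> real) \<Rightarrow> real) set)"
      by (rule measurable_cong_sets[OF sets_muP[OF k] refl])
    then show ?thesis using \<open>(\<lambda>z. z j) \<in> borel_measurable (MSp k)\<close> by simp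
  qed
  show ?thesis using measurable_compose[OF 1 2] .
qed

lemma main_bound:
  assumes indep: "prob_space.indep_vars M (\<lambda>i. PiM {..<s i} (\<lambda>_. borel)) (row s P) {..<b}"
  shows "(\<integral>\<omega>. fdp N0 (rejections b s alpha lam (P \<omega>)) \<partial>M) \<le> alpha"
proof (cases "integrable M (\<lambda>\<omega>. fdp N0 (rejections b s alpha lam (P \<omega>)))")
  case False
  then show ?thesis using alpha by (simp add: not_integrable_integral_eq)
next
  case True
  define \<Omega> where "\<Omega> = PiM {..<b} muP"
  define N where "N = PiM {..<b} MSp"
  define rv where "rv \<omega> = (\<lambda>k\<in>{..<b}. row s P k \<omega>)" for \<omega>
  have a0: "0 \<le> alpha" using alpha by simp
  have rvm: "rv \<in> measurable M N" unfolding rv_def N_def using rowm by (intro measurable_restrict) auto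
  have "0 \<in> {..<b}" using b_pos by auto
  then have ne: "{..<b} \<noteq> {}" by blast
  have rvs: "\<And>i. i \<in> {..<b} \<Longrightarrow> row s P i \<in> measurable M (PiM {..<s i} (\<lambda>_. borel))"
    using rowm unfolding MSp_def by auto
  have "distr M N rv = PiM {..<b} (\<lambda>k. distr M (MSp k) (row s P k))"
    using prob_space.indep_vars_iff_distr_eq_PiM'[OF prob ne rvs] indep
    unfolding N_def rv_def MSp_def by simp
  also have "\<dots> = \<Omega>" unfolding \<Omega>_def muP_def by (intro PiM_cong) auto
  finally have dist: "distr M N rv = \<Omega>" .
  have setsO: "sets \<Omega> = sets N" using dist[symmetric] by simp
  interpret PS: product_sigma_finite muP
    by (intro product_sigma_finite.intro prob_space_imp_sigma_finite muP_prob)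
  interpret O: prob_space \<Omega> unfolding \<Omega>_def by (intro prob_space_PiM muP_prob)
  have cO: "\<And>k j. k<b \<Longrightarrow> j<s k \<Longrightarrow> (\<lambda>y. y k j) \<in> borel_measurable \<Omega>"
    unfolding \<Omega>_def by (rule coord_Omega)
  have cN: "\<And>k j. k<b \<Longrightarrow> j<s k \<Longrightarrow> (\<lambda>y. y k j) \<in> borel_measurable N"
  proof -
    have "borel_measurable \<Omega> = (borel_measurable N :: ((nat \<Rightarrow> nat \<Rightarrow> real) \<Rightarrow> real) set)"
      by (rule measurable_cong_sets[OF setsO refl])
    then show "\<And>k j. k<b \<Longrightarrow> j<s k \<Longrightarrow> (\<lambda>y. y k j) \<in> borel_measurable N" using cO by simp
  qed
  have rvP: "rv \<omega> k j = P \<omega> k j" if "k < b" "j < s k" for \<omega> k j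
    using that by (simp add: rv_def row_eq)
  have cM: "\<And>k j. k<b \<Longrightarrow> j<s k \<Longrightarrow> (\<lambda>\<omega>. rv \<omega> k j) \<in> borel_measurable M"
    using meas rvP by simp
  have TfO: "(\<lambda>y. Tf b s alpha lam y i j) \<in> borel_measurable \<Omega>" if "(i,j) \<in> idx b s" for i j
    using meas_Tf[where N=\<Omega> and f="\<lambda>y. y", OF b_pos s_pos cO lam(2) that] by simp
  have TfN: "(\<lambda>y. Tf b s alpha lam y i j) \<in> borel_measurable N" if "(i,j) \<in> idx b s" for i j
    using meas_Tf[where N=N and f="\<lambda>y. y", OF b_pos s_pos cN lam(2) that] by simp
  have WfO: "(\<lambda>y. Wf b s lam y i j) \<in> borel_measurable \<Omega>" if "(i,j) \<in> idx b s" for i j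
    using meas_Wf[where N=\<Omega> and f="\<lambda>y. y", OF b_pos s_pos cO that] by simp
  have intTfO: "integrable \<Omega> (\<lambda>y. Tf b s alpha lam y i j)" if "(i,j) \<in> idx b s" for i j
    by (rule O.integrable_const_bound[where B="real b"]) (auto intro!: AE_I2 TfO[OF that] simp: abs_Tf_le[OF b_pos s_pos])
  have intWfO: "integrable \<Omega> (\<lambda>y. Wf b s lam y i j)" if "(i,j) \<in> idx b s" for i j
    by (rule O.integrable_const_bound[where B=1]) (auto intro!: AE_I2 WfO[OF that] simp: abs_Wf_le[OF b_pos s_pos])
  have intTfM: "integrable M (\<lambda>\<omega>. Tf b s alpha lam (rv \<omega>) i j)" if "(i,j) \<in> idx b s" for i j
    by (rule integrable_const_bound[where B="real b"])
       (auto intro!: AE_I2 meas_Tf[where N=M and f=rv, OF b_pos s_pos cM lam(2) that] simp: abs_Tf_le[OF b_pos s_pos])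
  have S1: "(\<integral>\<omega>. fdp N0 (rejections b s alpha lam (P \<omega>)) \<partial>M) \<le> (\<integral>\<omega>. (\<Sum>q\<in>N0. Tf b s alpha lam (rv \<omega>) (fst q) (snd q)) \<partial>M)"
  proof (rule Bochner_Integration.integral_mono[OF True])
    show "integrable M (\<lambda>\<omega>. \<Sum>q\<in>N0. Tf b s alpha lam (rv \<omega>) (fst q) (snd q))"
      using intTfM N0_sub by (intro Bochner_Integration.integrable_sum) auto
    fix \<omega> assume "\<omega> \<in> space M"
    have "fdp N0 (rejections b s alpha lam (P \<omega>)) \<le> (\<Sum>q\<in>N0. Tf b s alpha lam (P \<omega>) (fst q) (snd q))"
      by (rule fdp_bound[OF b_pos s_pos lam(2) alpha N0_sub])
    also have "\<dots> = (\<Sum>q\<in>N0. Tf b s alpha lam (rv \<omega>) (fst q) (snd q))"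
    proof (rule sum.cong[OF refl])
      fix q assume q: "q \<in> N0"
      have eq: "\<forall>(k,j)\<in>idx b s. P \<omega> k j = rv \<omega> k j" using rvP by (auto simp: idx_def)
      show "Tf b s alpha lam (P \<omega>) (fst q) (snd q) = Tf b s alpha lam (rv \<omega>) (fst q) (snd q)"
        using Tf_local[OF b_pos s_pos lam(2) a0 eq, of "fst q" "snd q"] q N0_sub by auto
    qed
    finally show "fdp N0 (rejections b s alpha lam (P \<omega>)) \<le> (\<Sum>q\<in>N0. Tf b s alpha lam (rv \<omega>) (fst q) (snd q))" .
  qed
  also have "\<dots> = (\<Sum>q\<in>N0. (\<integral>\<omega>. Tf b s alpha lam (rv \<omega>) (fst q) (snd q) \<partial>M))"
    using intTfM N0_sub by (intro Bochner_Integration.integral_sum) auto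
  also have "\<dots> = (\<Sum>q\<in>N0. (\<integral>y. Tf b s alpha lam y (fst q) (snd q) \<partial>\<Omega>))"
  proof (rule sum.cong[OF refl])
    fix q assume q: "q \<in> N0"
    then have qi: "(fst q, snd q) \<in> idx b s" using N0_sub by auto
    show "(\<integral>\<omega>. Tf b s alpha lam (rv \<omega>) (fst q) (snd q) \<partial>M) = (\<integral>y. Tf b s alpha lam y (fst q) (snd q) \<partial>\<Omega>)"
      using integral_distr[OF rvm TfN[OF qi]] dist by simp
  qed
  also have "\<dots> \<le> (\<Sum>q\<in>N0. alpha * (\<integral>y. Wf b s lam y (fst q) (snd q) \<partial>\<Omega>))"
  proof (rule sum_mono)
    fix q assume q: "q \<in> N0"
    obtain i j where qij: "q = (i,j)" by force
    have ijN: "(i,j) \<in> N0" using q qij by simp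
    have ij: "(i,j) \<in> idx b s" using ijN N0_sub by auto
    then have i: "i < b" and j: "j < s i" by (auto simp: idx_def)
    define I where "I = {..<b} - {i}"
    have II: "insert i I = {..<b}" "finite I" "i \<notin> I" unfolding I_def using i by auto
    define h where "h y = Tf b s alpha lam y i j - alpha * Wf b s lam y i j" for y
    have hint: "integrable (PiM (insert i I) muP) h"
      unfolding II(1) h_def \<Omega>_def[symmetric] using intTfO[OF ij] intWfO[OF ij] by auto
    have inner: "(\<integral>y. h (x(i:=y)) \<partial>muP i) \<le> 0" for x
    proof -
      have mui: "muP i = distr M (MSp i) (row s P i)" unfolding muP_def using i by simp
      have fMS: "\<And>k j'. k<b \<Longrightarrow> j'<s k \<Longrightarrow> (\<lambda>z. (x(i:=z)) k j') \<in> borel_measurable (MSp i)"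
        unfolding MSp_def by (rule fm_MS[OF i])
      have Tm: "(\<lambda>z. Tf b s alpha lam (x(i:=z)) i j) \<in> borel_measurable (MSp i)"
        using meas_Tf[where N="MSp i" and f="\<lambda>z. x(i:=z)", OF b_pos s_pos fMS lam(2) ij] by simp
      have Wm: "(\<lambda>z. Wf b s lam (x(i:=z)) i j) \<in> borel_measurable (MSp i)"
        using meas_Wf[where N="MSp i" and f="\<lambda>z. x(i:=z)", OF b_pos s_pos fMS ij] by simp
      interpret Mi: prob_space "muP i" by (rule muP_prob)
      have bmi: "borel_measurable (muP i) = (borel_measurable (MSp i) :: ((nat \<Rightarrow> real) \<Rightarrow> real) set)"
        by (rule measurable_cong_sets[OF sets_muP[OF i] refl])
      have Tm': "(\<lambda>z. Tf b s alpha lam (x(i:=z)) i j) \<in> borel_measurable (muP i)"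
        using Tm bmi by simp
      have Wm': "(\<lambda>z. Wf b s lam (x(i:=z)) i j) \<in> borel_measurable (muP i)"
        using Wm bmi by simp
      have iT: "integrable (muP i) (\<lambda>z. Tf b s alpha lam (x(i:=z)) i j)"
        by (rule Mi.integrable_const_bound[where B="real b"]) (auto intro!: AE_I2 Tm' simp: abs_Tf_le[OF b_pos s_pos])
      have iW: "integrable (muP i) (\<lambda>z. Wf b s lam (x(i:=z)) i j)"
        by (rule Mi.integrable_const_bound[where B=1]) (auto intro!: AE_I2 Wm' simp: abs_Wf_le[OF b_pos s_pos])
      have "(\<integral>y. h (x(i:=y)) \<partial>muP i) = (\<integral>y. Tf b s alpha lam (x(i:=y)) i j \<partial>muP i) - alpha * (\<integral>y. Wf b s lam (x(i:=y)) i j \<partial>muP i)"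
        unfolding h_def using iT iW by simp
      also have "(\<integral>y. Tf b s alpha lam (x(i:=y)) i j \<partial>muP i) = (\<integral>\<omega>. Tf b s alpha lam (x(i:=row s P i \<omega>)) i j \<partial>M)"
        unfolding mui by (rule integral_distr[OF rowm[OF i] Tm])
      also have "(\<integral>y. Wf b s lam (x(i:=y)) i j \<partial>muP i) = (\<integral>\<omega>. Wf b s lam (x(i:=row s P i \<omega>)) i j \<partial>M)"
        unfolding mui by (rule integral_distr[OF rowm[OF i] Wm])
      also have "\<dots> = (1 - lam) / (real (Dm b s lam x i) + real (smax b s))"
        by (rule inner_W[OF ijN])
      finally have "(\<integral>y. h (x(i:=y)) \<partial>muP i) \<le> cc b s alpha lam x i - alpha * ((1 - lam) / (real (Dm b s lam x i) + real (smax b s)))"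
        using inner_T[OF ijN, of x] by linarith
      also have "\<dots> = 0" unfolding cc_def by simp
      finally show ?thesis .
    qed
    have "(\<integral>y. h y \<partial>\<Omega>) = (\<integral>x. (\<integral>y. h (x(i:=y)) \<partial>muP i) \<partial>PiM I muP)"
      unfolding \<Omega>_def II(1)[symmetric] by (rule PS.product_integral_insert[OF II(2,3) hint])
    also have "\<dots> \<le> 0"
    proof -
      have "0 \<le> (\<integral>x. - (\<integral>y. h (x(i:=y)) \<partial>muP i) \<partial>PiM I muP)"
        by (rule integral_nonneg_AE) (use inner in auto)
      then show ?thesis by simp
    qed
    finally have "(\<integral>y. h y \<partial>\<Omega>) \<le> 0" .
    moreover have "(\<integral>y. h y \<partial>\<Omega>) = (\<integral>y. Tf b s alpha lam y i j \<partial>\<Omega>) - alpha * (\<integral>y. Wf b s lam y i j \<partial>\<Omega>)"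
      unfolding h_def using intTfO[OF ij] intWfO[OF ij] by simp
    ultimately show "(\<integral>y. Tf b s alpha lam y (fst q) (snd q) \<partial>\<Omega>) \<le> alpha * (\<integral>y. Wf b s lam y (fst q) (snd q) \<partial>\<Omega>)"
      using qij by simp
  qed
  also have "\<dots> = alpha * (\<integral>y. (\<Sum>q\<in>N0. Wf b s lam y (fst q) (snd q)) \<partial>\<Omega>)"
    using intWfO N0_sub by (subst Bochner_Integration.integral_sum) (auto simp: sum_distrib_left)
  also have "\<dots> \<le> alpha * 1"
  proof (rule mult_left_mono[OF _ a0])
    have isum: "integrable \<Omega> (\<lambda>y. \<Sum>q\<in>N0. Wf b s lam y (fst q) (snd q))"
    proof (rule Bochner_Integration.integrable_sum)
      fix q assume "q \<in> N0"
      then have "(fst q, snd q) \<in> idx b s" using N0_sub by auto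
      then show "integrable \<Omega> (\<lambda>y. Wf b s lam y (fst q) (snd q))" by (rule intWfO)
    qed
    have "(\<integral>y. (\<Sum>q\<in>N0. Wf b s lam y (fst q) (snd q)) \<partial>\<Omega>) \<le> (\<integral>y. 1 \<partial>\<Omega>)"
      by (rule Bochner_Integration.integral_mono[OF isum O.integrable_const]) (rule Wf_sum[OF b_pos s_pos N0_sub])
    then show "(\<integral>y. (\<Sum>q\<in>N0. Wf b s lam y (fst q) (snd q)) \<partial>\<Omega>) \<le> 1" using O.prob_space by simp
  qed
  finally show ?thesis by simp
qed

end

theorem mainTheorem4:
  fixes M :: "'w measure" and P :: "'w \<Rightarrow> nat \<Rightarrow> nat \<Rightarrow> real"
    and b :: nat and s :: "nat \<Rightarrow> nat" and N0 :: "(nat \<times> nat) set"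
    and alpha lam :: real
  assumes prob: "prob_space M"
    and b_pos: "b \<ge> 1"
    and s_pos: "\<forall>i<b. s i \<ge> 1"
    and meas: "\<forall>i<b. \<forall>j<s i. (\<lambda>\<omega>. P \<omega> i j) \<in> borel_measurable M"
    and pvals: "\<forall>\<omega>\<in>space M. \<forall>i<b. \<forall>j<s i. 0 \<le> P \<omega> i j \<and> P \<omega> i j \<le> 1"
    and N0_sub: "N0 \<subseteq> idx b s"
    and unif: "\<forall>(i,j)\<in>N0. \<forall>u\<in>{0..1}.
                 measure M {\<omega>\<in>space M. P \<omega> i j \<le> u} = u"
    and indep: "prob_space.indep_vars M (\<lambda>i. PiM {..<s i} (\<lambda>_. borel)) (row s P) {..<b}"
    and posdep: "\<forall>(i,j)\<in>N0. \<forall>\<phi> :: (nat \<Rightarrow> real) \<Rightarrow> real.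
        (\<phi> \<in> borel_measurable (PiM {..<s i} (\<lambda>_. borel))
         \<and> (\<forall>x y. (\<forall>k<s i. x k \<le> y k) \<longrightarrow> \<phi> x \<le> \<phi> y)
         \<and> integrable M (\<lambda>\<omega>. \<phi> (row s P i \<omega>)))
        \<longrightarrow> (\<forall>u v. 0 < u \<and> u \<le> v \<and> v < 1 \<longrightarrow>
              (\<integral>\<omega>. \<phi> (row s P i \<omega>) * indicator {\<omega>\<in>space M. P \<omega> i j \<le> u} \<omega> \<partial>M)
                / measure M {\<omega>\<in>space M. P \<omega> i j \<le> u}
              \<le> (\<integral>\<omega>. \<phi> (row s P i \<omega>) * indicator {\<omega>\<in>space M. P \<omega> i j \<le> v} \<omega> \<partial>M)
                / measure M {\<omega>\<in>space M. P \<omega> i j \<le> v})"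
    and alpha: "0 < alpha" "alpha < 1"
    and lam: "(2 * real b + 3) powr (- 2 / (real b + 2)) \<le> lam" "lam < 1"
  shows "(\<integral>\<omega>. fdp N0 (rejections b s alpha lam (P \<omega>)) \<partial>M) \<le> alpha"
proof -
  have "0 < (2 * real b + 3) powr (- 2 / (real b + 2))" by simp
  then have l0: "0 \<le> lam" using lam(1) by linarith
  show ?thesis
    by (rule main_bound[OF prob b_pos s_pos meas N0_sub unif posdep alpha(1) l0 lam(2) indep])
qed

end
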